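(* Let $r\ge0$ and $\delta\ge0$, and let $\overline{D}_\delta=\{z\in\mathbb{C}:|z|\le\delta\}$. Then $f_{c_2}\circ f_{c_1}(\overline{D}_\delta)\subset\overline{D}_\delta$ for every $c_1,c_2\in\overline{B}(-1,r)=\{c'\in\mathbb{C}:|c'+1|\le r\}$ if and only if $\delta^4+2(1+r)\delta^2+r^2+3r\le\delta$.
   Context: $f_c(z)=z^2+c$ for $c\in\mathbb{C}$. *)

theory Defs
  imports "HOL-Analysis.Analysis"
begin

definition qpoly :: "complex \<Rightarrow> complex \<Rightarrow> complex" where
  "qpoly c z = z^2 + c"

end

theory Submission
  imports Defs
begin

lemma bound:
  fixes r \<delta> :: real and c1 c2 z :: complex
  assumes "r \<ge> 0" "\<delta> \<ge> 0" "norm (c1 + 1) \<le> r" "norm (c2 + 1) \<le> r" "norm z \<le> \<delta>"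
  shows "norm ((z^2 + c1)^2 + c2) \<le> \<delta>^4 + 2*(1+r)*\<delta>^2 + r^2 + 3*r"
proof -
  define u where "u = z^2 + (c1 + 1)"
  define b where "b = c2 + 1"
  have eq: "(z^2 + c1)^2 + c2 = u^2 - 2*u + b" unfolding u_def b_def by (simp add: algebra_simps power2_eq_square)
  have nz: "norm (z^2) \<le> \<delta>^2" using assms by (simp add: norm_power power_mono)
  have nu: "norm u \<le> \<delta>^2 + r" unfolding u_def using nz assms(3) by (meson add_mono norm_triangle_le)
  have "norm (u^2 - 2*u + b) \<le> norm (u^2) + norm (2*u) + norm b"
    by (metis norm_triangle_ineq4 norm_triangle_le add_mono order_refl norm_triangle_ineq)
  also have "\<dots> = (norm u)^2 + 2 * norm u + norm b" by (simp add: norm_power norm_mult)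
  also have "\<dots> \<le> (\<delta>^2 + r)^2 + 2*(\<delta>^2 + r) + r"
    using nu assms(4) b_def by (intro add_mono power_mono) auto
  also have "\<dots> = \<delta>^4 + 2*(1+r)*\<delta>^2 + r^2 + 3*r" by (simp add: algebra_simps power2_eq_square power4_eq_xxxx)
  finally show ?thesis using eq by simp
qed

theorem lemma4p16:
  fixes r \<delta> :: real
  assumes "r \<ge> 0" and "\<delta> \<ge> 0"
  shows "(\<forall>c1 \<in> cball (-1) r. \<forall>c2 \<in> cball (-1) r.
            (qpoly c2 \<circ> qpoly c1) ` cball 0 \<delta> \<subseteq> cball 0 \<delta>)
         \<longleftrightarrow> \<delta>^4 + 2*(1+r)*\<delta>^2 + r^2 + 3*r \<le> \<delta>"
proof
  assume H: "\<forall>c1 \<in> cball (-1) r. \<forall>c2 \<in> cball (-1) r.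
            (qpoly c2 \<circ> qpoly c1) ` cball 0 \<delta> \<subseteq> cball 0 \<delta>"
  have c1: "complex_of_real (-1 - r) \<in> cball (-1) r" using assms by (simp add: dist_norm)
  have c2: "complex_of_real (-1 + r) \<in> cball (-1) r" using assms by (simp add: dist_norm)
  have z: "\<i> * complex_of_real \<delta> \<in> cball 0 \<delta>" using assms by (simp add: norm_mult)
  have "(qpoly (complex_of_real (-1 + r)) \<circ> qpoly (complex_of_real (-1 - r))) (\<i> * complex_of_real \<delta>) \<in> cball 0 \<delta>"
    using H c1 c2 z by blast
  moreover have "(qpoly (complex_of_real (-1 + r)) \<circ> qpoly (complex_of_real (-1 - r))) (\<i> * complex_of_real \<delta>)
     = complex_of_real (\<delta>^4 + 2*(1+r)*\<delta>^2 + r^2 + 3*r)"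
    by (simp add: qpoly_def algebra_simps power2_eq_square power4_eq_xxxx)
  moreover have "\<delta>^4 + 2*(1+r)*\<delta>^2 + r^2 + 3*r \<ge> 0" using assms by simp
  ultimately show "\<delta>^4 + 2*(1+r)*\<delta>^2 + r^2 + 3*r \<le> \<delta>" by (metis mem_cball_0 norm_of_real abs_of_nonneg)
next
  assume L: "\<delta>^4 + 2*(1+r)*\<delta>^2 + r^2 + 3*r \<le> \<delta>"
  show "\<forall>c1 \<in> cball (-1) r. \<forall>c2 \<in> cball (-1) r.
            (qpoly c2 \<circ> qpoly c1) ` cball 0 \<delta> \<subseteq> cball 0 \<delta>"
  proof (intro ballI subsetI)
    fix c1 c2 w assume h1: "c1 \<in> cball (-1) r" and h2: "c2 \<in> cball (-1) r" and "w \<in> (qpoly c2 \<circ> qpoly c1) ` cball 0 \<delta>"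
    then obtain z where hz: "z \<in> cball 0 \<delta>" and w: "w = (z^2 + c1)^2 + c2" by (auto simp: qpoly_def)
    have n1: "norm (c1 + 1) \<le> r" using h1 by (simp add: dist_norm norm_minus_commute[of "-1" c1])
    have n2: "norm (c2 + 1) \<le> r" using h2 by (simp add: dist_norm norm_minus_commute[of "-1" c2])
    have "norm z \<le> \<delta>" using hz by simp
    from bound[OF assms n1 n2 this] L show "w \<in> cball 0 \<delta>" using w by simp
  qed
qed

end
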